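(* Let $(X,d,\kappa)$ be a digital metric space of finite diameter, where $d$ is any $\ell_p$ metric. Let $f: X \to X$ be a function. If $f$ is a Kannan contraction map with constant $\alpha$, or a Chatterjea contraction map with constant $\alpha$, where $0 < \alpha < \frac{1}{2\,\mathrm{diam}\, X}$, then $f$ is a constant function.
   Context: A digital metric space is a triple $(X,d,\kappa)$ with $X\subset\mathbb{Z}^n$, $\kappa$ an adjacency relation on $X$, and $d$ a metric on $X$. The $\ell_p$ metric ($1\le p\le\infty$) is $d(x,y) = (\sum_i |x_i-y_i|^p)^{1/p}$ for $p<\infty$ and $\max_i|x_i-y_i|$ for $p=\infty$. $\mathrm{diam}\, X = \max\{d(x,y) : x,y\in X\}$. $f$ is a Kannan contraction map with constant $\alpha \in (0,1/2)$ if $d(f(x),f(y)) \le \alpha[d(x,f(x)) + d(y,f(y))]$ for all $x,y \in X$. $f$ is a Chatterjea contraction map with constant $\alpha \in (0,1/2)$ if $d(f(x),f(y)) \le \alpha[d(x,f(y)) + d(y,f(x))]$ for all $x,y\in X$. *)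

theory Defs
  imports "HOL-Analysis.Analysis" "HOL-Library.Extended_Real"
begin

text \<open>Points of the digital image are integer vectors in Z^n, modelled as int ^ 'n
  (the dimension n = CARD('n) is arbitrary but fixed).\<close>

definition lp_dist :: "ereal \<Rightarrow> int ^ 'n \<Rightarrow> int ^ 'n \<Rightarrow> real" where
  "lp_dist p x y =
     (if p = \<infinity> then Max (range (\<lambda>i. real_of_int \<bar>x $ i - y $ i\<bar>))
      else (\<Sum>i\<in>UNIV. real_of_int \<bar>x $ i - y $ i\<bar> powr real_of_ereal p)
             powr (1 / real_of_ereal p))"

definition digital_diam :: "('a \<Rightarrow> 'a \<Rightarrow> real) \<Rightarrow> 'a set \<Rightarrow> real" where
  "digital_diam d X = Sup {d x y | x y. x \<in> X \<and> y \<in> X}"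

definition finite_diameter :: "('a \<Rightarrow> 'a \<Rightarrow> real) \<Rightarrow> 'a set \<Rightarrow> bool" where
  "finite_diameter d X \<longleftrightarrow> bdd_above {d x y | x y. x \<in> X \<and> y \<in> X}"

definition kannan_contraction ::
  "('a \<Rightarrow> 'a \<Rightarrow> real) \<Rightarrow> 'a set \<Rightarrow> ('a \<Rightarrow> 'a) \<Rightarrow> real \<Rightarrow> bool" where
  "kannan_contraction d X f \<alpha> \<longleftrightarrow> 0 < \<alpha> \<and> \<alpha> < 1/2 \<and>
     (\<forall>x\<in>X. \<forall>y\<in>X. d (f x) (f y) \<le> \<alpha> * (d x (f x) + d y (f y)))"

definition chatterjea_contraction ::
  "('a \<Rightarrow> 'a \<Rightarrow> real) \<Rightarrow> 'a set \<Rightarrow> ('a \<Rightarrow> 'a) \<Rightarrow> real \<Rightarrow> bool" where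
  "chatterjea_contraction d X f \<alpha> \<longleftrightarrow> 0 < \<alpha> \<and> \<alpha> < 1/2 \<and>
     (\<forall>x\<in>X. \<forall>y\<in>X. d (f x) (f y) \<le> \<alpha> * (d x (f y) + d y (f x)))"

end

theory Submission
  imports Defs
begin

lemma lp_ge1:
  fixes u v :: "int ^ 'n"
  assumes p: "1 \<le> p" and ne: "u \<noteq> v"
  shows "1 \<le> lp_dist p u v"
proof -
  obtain i where i: "u $ i \<noteq> v $ i" using ne by (metis vec_eq_iff)
  have t: "1 \<le> real_of_int \<bar>u $ i - v $ i\<bar>" using i by simp
  show ?thesis
  proof (cases "p = \<infinity>")
    case True
    have "real_of_int \<bar>u $ i - v $ i\<bar> \<le> Max (range (\<lambda>i. real_of_int \<bar>u $ i - v $ i\<bar>))"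
      by (rule Max_ge) auto
    then show ?thesis using True t unfolding lp_dist_def if_P[OF True] by linarith
  next
    case False
    then obtain r where r: "p = ereal r" using p by (cases p) auto
    have r1: "1 \<le> r" using p r by simp
    have "1 \<le> real_of_int \<bar>u $ i - v $ i\<bar> powr r" using t r1 by (simp add: ge_one_powr_ge_zero)
    also have "\<dots> \<le> (\<Sum>j\<in>UNIV. real_of_int \<bar>u $ j - v $ j\<bar> powr r)"
      by (rule member_le_sum) auto
    finally have s: "1 \<le> (\<Sum>j\<in>UNIV. real_of_int \<bar>u $ j - v $ j\<bar> powr r)" .
    have "1 \<le> (\<Sum>j\<in>UNIV. real_of_int \<bar>u $ j - v $ j\<bar> powr r) powr (1 / r)"
      using s r1 by (simp add: ge_one_powr_ge_zero)
    then show ?thesis using False r by (simp add: lp_dist_def)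
  qed
qed

theorem mainTheorem6:
  fixes X :: "(int ^ 'n) set" and f :: "int ^ 'n \<Rightarrow> int ^ 'n"
    and p :: ereal and \<alpha> :: real
  assumes "1 \<le> p"
    and "finite_diameter (lp_dist p) X"
    and "\<forall>x\<in>X. f x \<in> X"
    and "kannan_contraction (lp_dist p) X f \<alpha> \<or> chatterjea_contraction (lp_dist p) X f \<alpha>"
    and "0 < \<alpha>"
    and "2 * digital_diam (lp_dist p) X * \<alpha> < 1"
  shows "\<exists>c. \<forall>x\<in>X. f x = c"
proof -
  let ?d = "lp_dist p"
  let ?D = "digital_diam ?d X"
  have le: "?d x y \<le> ?D" if "x \<in> X" "y \<in> X" for x y
    unfolding digital_diam_def
    by (rule cSup_upper) (use that assms(2) in \<open>auto simp: finite_diameter_def\<close>)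
  have eq: "f x = f y" if x: "x \<in> X" and y: "y \<in> X" for x y
  proof (rule ccontr)
    assume "f x \<noteq> f y"
    then have one: "1 \<le> ?d (f x) (f y)" using lp_ge1 assms(1) by blast
    have fx: "f x \<in> X" "f y \<in> X" using x y assms(3) by auto
    have "?d (f x) (f y) \<le> \<alpha> * (?D + ?D)"
    proof (cases "kannan_contraction ?d X f \<alpha>")
      case True
      then have "?d (f x) (f y) \<le> \<alpha> * (?d x (f x) + ?d y (f y))"
        using x y by (auto simp: kannan_contraction_def)
      also have "\<dots> \<le> \<alpha> * (?D + ?D)"
        using le[OF x fx(1)] le[OF y fx(2)] assms(5) by (intro mult_left_mono) auto
      finally show ?thesis .
    next
      case False
      then have "chatterjea_contraction ?d X f \<alpha>" using assms(4) by blast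
      then have "?d (f x) (f y) \<le> \<alpha> * (?d x (f y) + ?d y (f x))"
        using x y by (auto simp: chatterjea_contraction_def)
      also have "\<dots> \<le> \<alpha> * (?D + ?D)"
        using le[OF x fx(2)] le[OF y fx(1)] assms(5) by (intro mult_left_mono) auto
      finally show ?thesis .
    qed
    then show False using one assms(6) by (simp add: algebra_simps)
  qed
  show ?thesis
  proof (cases "X = {}")
    case True then show ?thesis by auto
  next
    case False
    then obtain x0 where "x0 \<in> X" by auto
    then show ?thesis using eq by blast
  qed
qed

end
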